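(* Let $\mathcal Y\subset\mathbb R^d$ be a finite set such that no element of $\mathcal Y$ is a strict convex combination of other elements of $\mathcal Y$, let $\kappa>0$, let $\xi_1,\dots,\xi_N$ be noise samples and $c:\mathcal Y\times\Xi\to\mathbb R$ a cost, and set $\gamma_i=(c(y,\xi_i))_{y\in\mathcal Y}\in\mathbb R^{\mathcal Y}$. Let $\Omega_\Delta$ be a proper lower-semicontinuous convex function on $\mathbb R^{\mathcal Y}$ with domain $\Delta^{\mathcal Y}$ whose restriction to the affine hull $H_\Delta$ of $\Delta^{\mathcal Y}$ is Legendre-type, and suppose $\Omega_\Delta=\Psi_\Delta+\mathbb I_{\Delta^{\mathcal Y}}$ with $\Psi_\Delta$ a Legendre-type function. Assume that the Jensen gap of $\Psi_\Delta$, $$q_\otimes=(q_1,\dots,q_N)\mapsto \frac1N\sum_{i=1}^N\Psi_\Delta(q_i)-\Psi_\Delta\Big(\frac1N\sum_{i=1}^N q_i\Big),$$ is convex on $\Delta_\otimes=(\Delta^{\mathcal Y})^N$. Consider the alternating scheme: choose $\bar s^{(0)}_\otimes\in\bar S_\otimes$, and for $t\ge0$ let $$q_\otimes^{(t+1)}=\operatorname*{argmin}_{q_\otimes\in\Delta_\otimes}\mathcal S_{N}(\bar s_\otimes^{(t)},q_\otimes),\qquad \bar s_\otimes^{(t+1)}\in\operatorname*{argmin}_{s_\otimes\in\bar S_\otimes}\mathcal S_{N}(s_\otimes,q_\otimes^{(t+1)}).$$ Then the iterates converge in value to the global minimum of $\mathcal S_N$ over $\bar S_\otimes\times\Delta_\otimes$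 with rate $\mathcal O(1/t)$, i.e. $\mathcal S_N(\bar s_\otimes^{(t)},q_\otimes^{(t)})-\inf_{\bar S_\otimes\times\Delta_\otimes}\mathcal S_N=\mathcal O(1/t)$.
   Context: $\Delta^{\mathcal Y}=\{q\in\mathbb R^{\mathcal Y}:q\ge0,\ \sum_y q_y=1\}$; $\mathbb I_A$ is the indicator function of $A$ (0 on $A$, $+\infty$ elsewhere). A function $\Psi:\mathbb R^m\to\mathbb R\cup\{+\infty\}$ is Legendre-type if it is strictly convex on $\operatorname{int}(\operatorname{dom}\Psi)$ and essentially smooth: $\operatorname{int}(\operatorname{dom}\Psi)\neq\emptyset$, $\Psi$ is differentiable on it, and $\|\nabla\Psi(\mu)\|\to+\infty$ as $\mu$ tends to the boundary of $\operatorname{dom}\Psi$; for the restriction to an affine subspace $H$ this is understood with respect to the induced metric of $H$. The Fenchel–Young loss is $\mathcal L_{\Omega_\Delta}(s;q)=\Omega_\Delta(q)+\Omega_\Delta^*(s)-\langle s|q\rangle$, with $\Omega_\Delta^*(s)=\sup_q\langle s|q\rangle-\Omega_\Delta(q)$. Define $S(s,q;\xi_i)=\langle\gamma_i|q\rangle+\kappa\mathcal L_{\Omega_\Delta}(s;q)$, $\bar S_\otimes=\{(s_1,\dots,s_N)\in(\mathbb R^{\mathcal Y})^N: s_1=\dots=s_N\}$, and $\mathcal S_N(s_\otimes,q_\otimes)=\frac1N\sum_{i=1}^N S(s_i,q_i;\xi_i)$. *)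

theory Defs
  imports "HOL-Analysis.Analysis" "HOL-Library.Extended_Real"
begin

definition ind_fun :: "'v set \<Rightarrow> 'v \<Rightarrow> ereal" where
  "ind_fun A x = (if x \<in> A then 0 else \<infinity>)"

definition edom :: "('v \<Rightarrow> ereal) \<Rightarrow> 'v set" where
  "edom f = {x. f x < \<infinity>}"

definition prob_simplex :: "(real ^ 'y::finite) set" where
  "prob_simplex = {q. (\<forall>y. 0 \<le> q $ y) \<and> (\<Sum>y\<in>UNIV. q $ y) = 1}"

definition proper_fun :: "('v \<Rightarrow> ereal) \<Rightarrow> bool" where
  "proper_fun f \<longleftrightarrow> (\<exists>x. f x < \<infinity>) \<and> (\<forall>x. f x > -\<infinity>)"

definition lsc_fun :: "('v::topological_space \<Rightarrow> ereal) \<Rightarrow> bool" where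
  "lsc_fun f \<longleftrightarrow> (\<forall>x. f x \<le> Liminf (at x) f)"

definition econvex :: "('v::real_vector \<Rightarrow> ereal) \<Rightarrow> bool" where
  "econvex f \<longleftrightarrow> (\<forall>x y t. 0 \<le> t \<and> t \<le> 1 \<longrightarrow>
      f (t *\<^sub>R x + (1 - t) *\<^sub>R y) \<le> ereal t * f x + ereal (1 - t) * f y)"

definition fconj :: "('v::real_inner \<Rightarrow> ereal) \<Rightarrow> 'v \<Rightarrow> ereal" where
  "fconj f s = (SUP q. ereal (s \<bullet> q) - f q)"

text \<open>Legendre type, relative to an affine subspace H (H = UNIV gives the usual notion).
 relint_dom H f: interior of dom f relative to H.  dir H: direction space of H.
 gnorm H D: norm of the gradient (w.r.t. the induced metric of H) of a derivative D.\<close>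

definition relint_dom :: "'v::real_normed_vector set \<Rightarrow> ('v \<Rightarrow> ereal) \<Rightarrow> 'v set" where
  "relint_dom H f = {x \<in> edom f. \<exists>e>0. ball x e \<inter> H \<subseteq> edom f}"

definition dir :: "'v::real_vector set \<Rightarrow> 'v set" where
  "dir H = {x - y | x y. x \<in> H \<and> y \<in> H}"

definition gnorm :: "'v::real_normed_vector set \<Rightarrow> ('v \<Rightarrow> real) \<Rightarrow> real" where
  "gnorm H D = Sup {\<bar>D v\<bar> | v. v \<in> dir H \<and> norm v = 1}"

definition legendre_on :: "'v::euclidean_space set \<Rightarrow> ('v \<Rightarrow> ereal) \<Rightarrow> bool" where
  "legendre_on H f \<longleftrightarrow>
     affine H \<and> edom f \<subseteq> H \<and>
     (let U = relint_dom H f in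
       \<comment> \<open>strict convexity on the (relative) interior of the domain\<close>
       (\<forall>x\<in>U. \<forall>y\<in>U. \<forall>t. x \<noteq> y \<and> 0 < t \<and> t < 1 \<longrightarrow>
           f (t *\<^sub>R x + (1 - t) *\<^sub>R y) < ereal t * f x + ereal (1 - t) * f y) \<and>
       \<comment> \<open>essential smoothness\<close>
       U \<noteq> {} \<and>
       (\<forall>x\<in>U. f x \<noteq> -\<infinity> \<and>
          (\<lambda>z. real_of_ereal (f z)) differentiable (at x within H)) \<and>
       (\<forall>(u::nat \<Rightarrow> 'v) b (Df::nat \<Rightarrow> 'v \<Rightarrow> real).
          (\<forall>k. u k \<in> U \<and> ((\<lambda>z. real_of_ereal (f z)) has_derivative Df k) (at (u k) within H))
          \<longrightarrow> u \<longlonglongrightarrow> b \<longrightarrow> b \<in> closure (edom f) - U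
          \<longrightarrow> filterlim (\<lambda>k. gnorm H (Df k)) at_top sequentially))"

definition fy_loss :: "(real ^ 'y::finite \<Rightarrow> ereal) \<Rightarrow> real ^ 'y \<Rightarrow> real ^ 'y \<Rightarrow> ereal" where
  "fy_loss \<Omega> s q = \<Omega> q + fconj \<Omega> s - ereal (s \<bullet> q)"

definition gam :: "(real ^ 'd \<Rightarrow> 'xi \<Rightarrow> real) \<Rightarrow> ('y::finite \<Rightarrow> real ^ 'd) \<Rightarrow> 'xi \<Rightarrow> real ^ 'y" where
  "gam c emb xi = (\<chi> y. c (emb y) xi)"

definition S_single :: "(real ^ 'y::finite \<Rightarrow> ereal) \<Rightarrow> real \<Rightarrow> real ^ 'y \<Rightarrow> real ^ 'y \<Rightarrow> real ^ 'y \<Rightarrow> ereal" where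
  "S_single \<Omega> \<kappa> g s q = ereal (g \<bullet> q) + ereal \<kappa> * fy_loss \<Omega> s q"

definition S_N :: "(real ^ 'y::finite \<Rightarrow> ereal) \<Rightarrow> real \<Rightarrow> nat \<Rightarrow> (nat \<Rightarrow> real ^ 'y)
                   \<Rightarrow> (nat \<Rightarrow> real ^ 'y) \<Rightarrow> (nat \<Rightarrow> real ^ 'y) \<Rightarrow> ereal" where
  "S_N \<Omega> \<kappa> N g s q = ereal (1 / real N) * (\<Sum>i<N. S_single \<Omega> \<kappa> (g i) (s i) (q i))"

definition jensen_gap :: "(real ^ 'y::finite \<Rightarrow> ereal) \<Rightarrow> nat \<Rightarrow> (nat \<Rightarrow> real ^ 'y) \<Rightarrow> real" where
  "jensen_gap \<Psi> N q = (1 / real N) * (\<Sum>i<N. real_of_ereal (\<Psi> (q i)))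
       - real_of_ereal (\<Psi> ((1 / real N) *\<^sub>R (\<Sum>i<N. q i)))"

end

theory Submission
  imports Defs
begin



lemma simplex_mem: "x \<in> prob_simplex \<longleftrightarrow> (\<forall>y. 0 \<le> x $ y) \<and> (\<Sum>y\<in>UNIV. x $ y) = 1"
  by (simp add: prob_simplex_def)

lemma affine_sum1: "affine {x::real^'y::finite. (\<Sum>y\<in>UNIV. x $ y) = 1}"
  unfolding affine_def by (simp add: sum.distrib sum_distrib_left[symmetric])

lemma hull_sum1: "x \<in> affine hull (prob_simplex::(real^'y::finite) set) \<Longrightarrow> (\<Sum>y\<in>UNIV. x $ y) = 1"
proof -
  assume "x \<in> affine hull prob_simplex"
  moreover have "affine hull (prob_simplex::(real^'y) set) \<subseteq> {x. (\<Sum>y\<in>UNIV. x $ y) = 1}"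
    by (rule hull_minimal) (auto simp: prob_simplex_def affine_sum1)
  ultimately show ?thesis by auto
qed

lemma dir_sum0: "w \<in> dir (affine hull (prob_simplex::(real^'y::finite) set)) \<Longrightarrow> (\<Sum>y\<in>UNIV. w $ y) = 0"
  unfolding dir_def by (auto simp: sum_subtractf hull_sum1)

lemma simplex_sub_hull: "prob_simplex \<subseteq> affine hull prob_simplex"
  by (rule hull_subset)

lemma axis_simplex: "axis y 1 \<in> (prob_simplex :: (real^'y::finite) set)"
  by (auto simp: prob_simplex_def axis_def)

lemma simplex_coord_le1: assumes "x \<in> prob_simplex" shows "x $ y \<le> 1"
proof -
  have "x $ y \<le> (\<Sum>z\<in>UNIV. x $ z)"
    using assms by (intro member_le_sum) (auto simp: prob_simplex_def)
  then show ?thesis using assms by (simp add: prob_simplex_def)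
qed

lemma simplex_norm_le1: assumes "x \<in> (prob_simplex :: (real^'y::finite) set)" shows "norm x \<le> 1"
proof -
  have "norm x \<le> (\<Sum>y\<in>UNIV. \<bar>x $ y\<bar>)" by (rule norm_le_l1_cart)
  also have "\<dots> = 1" using assms by (simp add: prob_simplex_def)
  finally show ?thesis .
qed

definition ctr :: "real^'y::finite" where "ctr = (\<chi> y. 1 / real CARD('y))"

lemma ctr_simplex: "ctr \<in> (prob_simplex :: (real^'y::finite) set)"
  by (simp add: prob_simplex_def ctr_def)




lemma convex_simplex: "convex (prob_simplex :: (real^'y::finite) set)"
  unfolding convex_def prob_simplex_def
  by (auto simp: sum.distrib sum_distrib_left[symmetric])

locale om =
  fixes \<Omega> :: "real^'y::finite \<Rightarrow> ereal"
  assumes proper: "proper_fun \<Omega>" and dom: "edom \<Omega> = prob_simplex"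
    and cvx: "econvex \<Omega>" and leg: "legendre_on (affine hull prob_simplex) \<Omega>"
begin

definition wv :: "real^'y \<Rightarrow> real" where "wv x = real_of_ereal (\<Omega> x)"

lemma Om_fin: assumes "x \<in> prob_simplex" shows "\<Omega> x = ereal (wv x)"
proof -
  have "\<Omega> x < \<infinity>" using assms dom by (auto simp: edom_def)
  moreover have "\<Omega> x > -\<infinity>" using proper by (auto simp: proper_fun_def)
  ultimately show ?thesis unfolding wv_def by (cases "\<Omega> x") auto
qed

lemma Om_out: assumes "x \<notin> prob_simplex" shows "\<Omega> x = \<infinity>"
  using assms dom by (auto simp: edom_def)

lemma wv_cvx: assumes "x \<in> prob_simplex" "y \<in> prob_simplex" "0 \<le> t" "t \<le> 1"
  shows "wv (t *\<^sub>R x + (1 - t) *\<^sub>R y) \<le> t * wv x + (1 - t) * wv y"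
proof -
  have m: "t *\<^sub>R x + (1 - t) *\<^sub>R y \<in> prob_simplex"
    using convex_simplex assms unfolding convex_def by auto
  have "\<Omega> (t *\<^sub>R x + (1 - t) *\<^sub>R y) \<le> ereal t * \<Omega> x + ereal (1 - t) * \<Omega> y"
    using cvx assms unfolding econvex_def by auto
  then show ?thesis using Om_fin[OF m] Om_fin[OF assms(1)] Om_fin[OF assms(2)] by simp
qed

lemma wv_convex_on: "convex_on prob_simplex wv"
proof (rule convex_onI)
  fix t :: real and x y :: "real^'y" assume h: "0 < t" "t < 1" "x \<in> prob_simplex" "y \<in> prob_simplex"
  show "wv ((1 - t) *\<^sub>R x + t *\<^sub>R y) \<le> (1 - t) * wv x + t * wv y"
    using wv_cvx[OF h(3,4), of "1 - t"] h by simp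
qed (rule convex_simplex)

definition Mup :: real where "Mup = (\<Sum>y\<in>UNIV. \<bar>wv (axis y 1)\<bar>)"

lemma wv_upper: assumes "x \<in> prob_simplex" shows "wv x \<le> Mup"
proof -
  have e: "x = (\<Sum>y\<in>UNIV. (x $ y) *\<^sub>R axis y 1)"
    using basis_expansion[of x] by (simp add: scalar_mult_eq_scaleR)
  have "wv (\<Sum>y\<in>UNIV. (x $ y) *\<^sub>R axis y 1) \<le> (\<Sum>y\<in>UNIV. x $ y * wv (axis y 1))"
    using assms by (intro convex_on_sum[OF _ _ wv_convex_on] axis_simplex) (auto simp: prob_simplex_def)
  also have "\<dots> \<le> (\<Sum>y\<in>UNIV. \<bar>wv (axis y 1)\<bar>)"
  proof (rule sum_mono)
    fix y :: 'y
    have "0 \<le> x $ y" "x $ y \<le> 1" using assms simplex_coord_le1 by (auto simp: prob_simplex_def)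
    then have "x $ y * wv (axis y 1) \<le> x $ y * \<bar>wv (axis y 1)\<bar>" by (simp add: mult_left_mono)
    also have "\<dots> \<le> 1 * \<bar>wv (axis y 1)\<bar>" using \<open>x $ y \<le> 1\<close> by (intro mult_right_mono) auto
    finally show "x $ y * wv (axis y 1) \<le> \<bar>wv (axis y 1)\<bar>" by simp
  qed
  finally show ?thesis using e unfolding Mup_def by simp
qed

lemma wv_lower: "\<exists>L. \<forall>x\<in>prob_simplex. L \<le> wv x"
proof -
  define n where "n = real CARD('y)"
  have n1: "n \<ge> 1" unfolding n_def by (simp add: Suc_leI)
  define e where "e = 1 / n"
  have e0: "e > 0" using n1 by (simp add: e_def)
  have "wv x \<ge> ((1 + e) * wv ctr - Mup) / e" if x: "x \<in> prob_simplex" for x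
  proof -
    define z where "z = (1 + e) *\<^sub>R ctr - e *\<^sub>R x"
    have z: "z \<in> prob_simplex"
    proof -
      have "0 \<le> z $ y" for y
      proof -
        have "x $ y \<le> 1" using simplex_coord_le1[OF x] .
        then have "e * x $ y \<le> e" using e0 by (simp add: mult_left_le)
        moreover have "(1 + e) * (1 / n) \<ge> e" using n1 by (simp add: e_def field_simps)
        ultimately show ?thesis by (simp add: z_def ctr_def n_def[symmetric])
      qed
      moreover have "(\<Sum>y\<in>UNIV. z $ y) = 1"
        using x n1 by (simp add: z_def ctr_def sum_subtractf sum_distrib_left[symmetric] prob_simplex_def n_def[symmetric])
      ultimately show ?thesis by (simp add: prob_simplex_def)
    qed
    have c1: "(1 / (1 + e)) *\<^sub>R z + (1 - 1 / (1 + e)) *\<^sub>R x = (1/(1+e)) *\<^sub>R ctr + (e/(1+e)) *\<^sub>R ctr"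
      using e0 by (simp add: z_def scaleR_diff_right algebra_simps field_simps)
    have c2: "(1/(1+e)) *\<^sub>R ctr + (e/(1+e)) *\<^sub>R ctr = ctr"
    proof -
      have "(1/(1+e)) *\<^sub>R ctr + (e/(1+e)) *\<^sub>R ctr = (1/(1+e) + e/(1+e)) *\<^sub>R ctr"
        by (rule scaleR_add_left[symmetric])
      also have "1/(1+e) + e/(1+e) = 1" using e0 by (simp add: field_simps)
      finally show ?thesis by simp
    qed
    have c: "ctr = (1 / (1 + e)) *\<^sub>R z + (1 - 1 / (1 + e)) *\<^sub>R x" using c1 c2 by metis
    have "wv ctr \<le> (1 / (1 + e)) * wv z + (1 - 1 / (1 + e)) * wv x"
      using wv_cvx[OF z x, of "1 / (1 + e)"] e0 c by simp
    also have "\<dots> \<le> (1 / (1 + e)) * Mup + (1 - 1 / (1 + e)) * wv x"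
      using wv_upper[OF z] e0 by (simp add: divide_right_mono)
    also have "\<dots> = (Mup + e * wv x) / (1 + e)"
    proof -
      have "1 - 1 / (1 + e) = e / (1 + e)" using e0 by (simp add: field_simps)
      then show ?thesis by (simp add: add_divide_distrib)
    qed
    finally have "wv ctr \<le> (Mup + e * wv x) / (1 + e)" .
    then have "(1 + e) * wv ctr \<le> Mup + e * wv x"
      using e0 by (simp add: pos_le_divide_eq mult.commute)
    then show ?thesis using e0 by (simp add: field_simps)
  qed
  then show ?thesis by blast
qed

definition Bnd :: real where "Bnd = (SOME B. \<forall>x\<in>prob_simplex. \<bar>wv x\<bar> \<le> B)"

lemma wv_bound: assumes "x \<in> prob_simplex" shows "\<bar>wv x\<bar> \<le> Bnd"
proof -
  obtain L where L: "\<forall>x\<in>prob_simplex. L \<le> wv x" using wv_lower by blast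
  have "\<exists>B. \<forall>x\<in>prob_simplex. \<bar>wv x\<bar> \<le> B"
    by (rule exI[of _ "\<bar>L\<bar> + \<bar>Mup\<bar>"]) (use L wv_upper in force)
  from someI_ex[OF this] show ?thesis using assms unfolding Bnd_def by blast
qed

end



context om
begin

abbreviation HH :: "(real^'y) set" where "HH \<equiv> affine hull prob_simplex"

definition pos :: "real^'y \<Rightarrow> bool" where "pos x \<longleftrightarrow> x \<in> prob_simplex \<and> (\<forall>y. 0 < x $ y)"

lemma wv_eta: "(\<lambda>z. real_of_ereal (\<Omega> z)) = wv" by (simp add: wv_def fun_eq_iff)

lemma relint_pos: "x \<in> relint_dom HH \<Omega> \<longleftrightarrow> pos x"
proof
  assume x: "x \<in> relint_dom HH \<Omega>"
  then have xs: "x \<in> prob_simplex" and "\<exists>e>0. ball x e \<inter> HH \<subseteq> prob_simplex"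
    using dom by (auto simp: relint_dom_def)
  then obtain e where e: "e > 0" "ball x e \<inter> HH \<subseteq> prob_simplex" by blast
  show "pos x" unfolding pos_def
  proof (intro conjI allI xs)
    fix y
    show "0 < x $ y"
    proof (rule ccontr)
      assume "\<not> 0 < x $ y"
      then have x0: "x $ y = 0" using xs by (auto simp: prob_simplex_def intro: antisym)
      define \<delta> where "\<delta> = e / (2 * (1 + norm (x - axis y 1)))"
      have d0: "\<delta> > 0" using e by (simp add: \<delta>_def add_pos_nonneg)
      define z where "z = (1 + \<delta>) *\<^sub>R x + (- \<delta>) *\<^sub>R axis y 1"
      have "z \<in> HH"
        unfolding z_def
        by (rule mem_affine[OF affine_affine_hull]) (auto intro: hull_inc xs axis_simplex)
      moreover have "dist x z < e"
      proof -
        have "x - z = \<delta> *\<^sub>R (axis y 1 - x)" by (simp add: z_def algebra_simps)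
        then have "dist x z = \<delta> * norm (x - axis y 1)" using d0 by (simp add: dist_norm norm_minus_commute)
        also have "\<dots> < e"
        proof -
          have "\<delta> * norm (x - axis y 1) = e / 2 * (norm (x - axis y 1) / (1 + norm (x - axis y 1)))"
            by (simp add: \<delta>_def field_simps)
          also have "\<dots> \<le> e / 2 * 1"
            using e by (intro mult_left_mono) (auto simp: divide_le_eq add_pos_nonneg)
          finally show ?thesis using e by simp
        qed
        finally show ?thesis .
      qed
      ultimately have "z \<in> prob_simplex" using e by auto
      moreover have "z $ y < 0" using x0 d0 by (simp add: z_def)
      ultimately show False by (auto simp: prob_simplex_def dest: spec[of _ y])
    qed
  qed
next
  assume p: "pos x"
  then have xs: "x \<in> prob_simplex" by (simp add: pos_def)
  define m where "m = Min (range (\<lambda>y. x $ y))"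
  have m0: "m > 0" using p unfolding m_def pos_def by (subst Min_gr_iff) auto
  have mle: "m \<le> x $ y" for y unfolding m_def by (rule Min_le) auto
  have "ball x m \<inter> HH \<subseteq> prob_simplex"
  proof
    fix z assume z: "z \<in> ball x m \<inter> HH"
    have "0 \<le> z $ y" for y
    proof -
      have "\<bar>(x - z) $ y\<bar> \<le> norm (x - z)" by (rule component_le_norm_cart)
      also have "\<dots> < m" using z by (simp add: dist_norm)
      finally show ?thesis using mle[of y] by simp
    qed
    moreover have "(\<Sum>y\<in>UNIV. z $ y) = 1" using z hull_sum1 by auto
    ultimately show "z \<in> prob_simplex" by (simp add: prob_simplex_def)
  qed
  then show "x \<in> relint_dom HH \<Omega>" using m0 xs dom by (auto simp: relint_dom_def)
qed

end


context om begin
lemma pos_line: assumes "pos u" "(\<Sum>y\<in>UNIV. d $ y) = 0"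
  shows "\<exists>\<delta>>0. \<forall>t. \<bar>t\<bar> < \<delta> \<longrightarrow> u + t *\<^sub>R d \<in> prob_simplex"
proof -
  define m where "m = Min (range (\<lambda>y. u $ y))"
  have m0: "m > 0" using assms unfolding m_def pos_def by (subst Min_gr_iff) auto
  have mle: "m \<le> u $ y" for y unfolding m_def by (rule Min_le) auto
  define \<delta> where "\<delta> = m / (1 + norm d)"
  have d0: "\<delta> > 0" using m0 by (simp add: \<delta>_def add_pos_nonneg)
  have "u + t *\<^sub>R d \<in> prob_simplex" if t: "\<bar>t\<bar> < \<delta>" for t
  proof -
    have "0 \<le> u $ y + t * d $ y" for y
    proof -
      have "\<bar>t * d $ y\<bar> \<le> \<bar>t\<bar> * norm d" by (simp add: abs_mult component_le_norm_cart mult_left_mono)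
      also have "\<dots> \<le> \<delta> * norm d" using t by (intro mult_right_mono) auto
      also have "\<dots> \<le> m" using m0 by (simp add: \<delta>_def divide_le_eq add_pos_nonneg)
      finally show ?thesis using mle[of y] by linarith
    qed
    moreover have "(\<Sum>y\<in>UNIV. u $ y + t * d $ y) = 1"
      using assms by (simp add: sum.distrib sum_distrib_left[symmetric] pos_def prob_simplex_def)
    ultimately show ?thesis by (simp add: prob_simplex_def)
  qed
  then show ?thesis using d0 by blast
qed

end


context om begin
lemma dir_limit:
  assumes u: "pos u" and D: "(wv has_derivative D) (at u within HH)" and d: "(\<Sum>y\<in>UNIV. d $ y) = 0"
  shows "((\<lambda>t. (wv (u + t *\<^sub>R d) - wv u) / t) \<longlongrightarrow> D d) (at_right 0)"
proof -
  obtain \<delta> where d0: "\<delta> > 0" and dl: "\<And>t. \<bar>t\<bar> < \<delta> \<Longrightarrow> u + t *\<^sub>R d \<in> prob_simplex"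
    using pos_line[OF u d] by blast
  define S where "S = {t::real. u + t *\<^sub>R d \<in> prob_simplex}"
  have f: "((\<lambda>t. u + t *\<^sub>R d) has_derivative (\<lambda>t. t *\<^sub>R d)) (at 0 within S)"
    by (intro derivative_eq_intros) auto
  have img: "(\<lambda>t. u + t *\<^sub>R d) ` S \<subseteq> HH" unfolding S_def using hull_subset[of prob_simplex affine] by auto
  have g: "(wv has_derivative D) (at ((\<lambda>t. u + t *\<^sub>R d) 0) within (\<lambda>t. u + t *\<^sub>R d) ` S)"
    using has_derivative_subset[OF D img] by simp
  have c: "((\<lambda>t. wv (u + t *\<^sub>R d)) has_derivative (\<lambda>t. D (t *\<^sub>R d))) (at 0 within S)"
    using has_derivative_in_compose[OF f g] by simp
  have lin: "linear D" using has_derivative_linear[OF D] .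
  have "(\<lambda>t. D (t *\<^sub>R d)) = (*) (D d)"
    using linear_scale[OF lin] by (auto simp: fun_eq_iff)
  then have fd: "((\<lambda>t. wv (u + t *\<^sub>R d)) has_field_derivative D d) (at 0 within S)"
    using c by (simp add: has_field_derivative_def)
  then have l: "((\<lambda>t. (wv (u + t *\<^sub>R d) - wv u) / t) \<longlongrightarrow> D d) (at 0 within S)"
    using has_field_derivative_iff[THEN iffD1, OF fd] by simp
  have "at_right (0::real) = at 0 within (S \<inter> {0<..})"
  proof (rule at_within_nhd[of _ "ball 0 \<delta>"])
    show "{0<..} \<inter> ball 0 \<delta> - {0} = S \<inter> {0<..} \<inter> ball 0 \<delta> - {0}"
      using dl by (auto simp: S_def)
  qed (use d0 in simp_all)
  then show ?thesis using tendsto_within_subset[OF l, of "S \<inter> {0<..}"] by auto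
qed

end


context om
begin

lemma sum_diff0: assumes "x \<in> prob_simplex" "u \<in> prob_simplex" shows "(\<Sum>y\<in>UNIV. (x - u) $ y) = 0"
  using assms by (simp add: sum_subtractf prob_simplex_def)

lemma subgrad:
  assumes u: "pos u" and D: "(wv has_derivative D) (at u within HH)" and x: "x \<in> prob_simplex"
  shows "D (x - u) \<le> wv x - wv u"
proof -
  have us: "u \<in> prob_simplex" using u by (simp add: pos_def)
  have l: "((\<lambda>t. (wv (u + t *\<^sub>R (x - u)) - wv u) / t) \<longlongrightarrow> D (x - u)) (at_right 0)"
    by (rule dir_limit[OF u D sum_diff0[OF x us]])
  have ev: "\<forall>\<^sub>F t in at_right 0. (wv (u + t *\<^sub>R (x - u)) - wv u) / t \<le> wv x - wv u"
    unfolding eventually_at_right_field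
  proof (intro exI[of _ 1] conjI allI impI)
    fix t :: real assume t: "0 < t" "t < 1"
    have "u + t *\<^sub>R (x - u) = t *\<^sub>R x + (1 - t) *\<^sub>R u" by (simp add: algebra_simps)
    then have "wv (u + t *\<^sub>R (x - u)) \<le> t * wv x + (1 - t) * wv u"
      using wv_cvx[OF x us, of t] t by simp
    then have "wv (u + t *\<^sub>R (x - u)) - wv u \<le> t * (wv x - wv u)" by (simp add: algebra_simps)
    then show "(wv (u + t *\<^sub>R (x - u)) - wv u) / t \<le> wv x - wv u"
      using t by (simp add: divide_le_eq mult.commute)
  qed simp
  show ?thesis by (rule tendsto_upperbound[OF l ev]) simp
qed

lemma firstorder:
  assumes b: "pos b" and D: "(wv has_derivative D) (at b within HH)"
    and mn: "\<forall>x\<in>prob_simplex. wv b - v \<bullet> b \<le> wv x - v \<bullet> x" and x: "x \<in> prob_simplex"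
  shows "v \<bullet> (x - b) \<le> D (x - b)"
proof -
  have bs: "b \<in> prob_simplex" using b by (simp add: pos_def)
  have l: "((\<lambda>t. (wv (b + t *\<^sub>R (x - b)) - wv b) / t) \<longlongrightarrow> D (x - b)) (at_right 0)"
    by (rule dir_limit[OF b D sum_diff0[OF x bs]])
  have ev: "\<forall>\<^sub>F t in at_right 0. v \<bullet> (x - b) \<le> (wv (b + t *\<^sub>R (x - b)) - wv b) / t"
    unfolding eventually_at_right_field
  proof (intro exI[of _ 1] conjI allI impI)
    fix t :: real assume t: "0 < t" "t < 1"
    have e: "b + t *\<^sub>R (x - b) = t *\<^sub>R x + (1 - t) *\<^sub>R b" by (simp add: algebra_simps)
    have "b + t *\<^sub>R (x - b) \<in> prob_simplex"
      unfolding e using convex_simplex x bs t unfolding convex_def by auto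
    then have "wv b - v \<bullet> b \<le> wv (b + t *\<^sub>R (x - b)) - v \<bullet> (b + t *\<^sub>R (x - b))" using mn by blast
    then have "t * (v \<bullet> (x - b)) \<le> wv (b + t *\<^sub>R (x - b)) - wv b" by (simp add: inner_simps algebra_simps)
    then show "v \<bullet> (x - b) \<le> (wv (b + t *\<^sub>R (x - b)) - wv b) / t"
      using t by (simp add: le_divide_eq mult.commute)
  qed simp
  show ?thesis by (rule tendsto_lowerbound[OF l ev]) simp
qed

lemma subgrad_eq:
  assumes a: "pos a" and D: "(wv has_derivative D) (at a within HH)"
    and sg: "\<forall>z\<in>prob_simplex. wv a + \<sigma> \<bullet> (z - a) \<le> wv z" and d: "(\<Sum>y\<in>UNIV. d $ y) = 0"
  shows "D d = \<sigma> \<bullet> d"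
proof -
  have ge: "\<sigma> \<bullet> e \<le> D e" if e: "(\<Sum>y\<in>UNIV. e $ y) = 0" for e
  proof -
    have l: "((\<lambda>t. (wv (a + t *\<^sub>R e) - wv a) / t) \<longlongrightarrow> D e) (at_right 0)"
      by (rule dir_limit[OF a D e])
    obtain \<delta> where d0: "\<delta> > 0" and dl: "\<And>t. \<bar>t\<bar> < \<delta> \<Longrightarrow> a + t *\<^sub>R e \<in> prob_simplex"
      using pos_line[OF a e] by blast
    have ev: "\<forall>\<^sub>F t in at_right 0. \<sigma> \<bullet> e \<le> (wv (a + t *\<^sub>R e) - wv a) / t"
      unfolding eventually_at_right_field
    proof (intro exI[of _ \<delta>] conjI allI impI)
      fix t :: real assume t: "0 < t" "t < \<delta>"
      have "wv a + \<sigma> \<bullet> (a + t *\<^sub>R e - a) \<le> wv (a + t *\<^sub>R e)" using sg dl[of t] t by auto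
      then have "t * (\<sigma> \<bullet> e) \<le> wv (a + t *\<^sub>R e) - wv a" by (simp add: inner_simps algebra_simps)
      then show "\<sigma> \<bullet> e \<le> (wv (a + t *\<^sub>R e) - wv a) / t"
        using t by (simp add: le_divide_eq mult.commute)
    qed (use d0 in simp)
    show ?thesis by (rule tendsto_lowerbound[OF l ev]) simp
  qed
  have lin: "linear D" using has_derivative_linear[OF D] .
  have "\<sigma> \<bullet> (- d) \<le> D (- d)" using d by (intro ge) (simp add: sum_negf)
  then have "D d \<le> \<sigma> \<bullet> d" using linear_neg[OF lin, of d] by simp
  with ge[OF d] show ?thesis by simp
qed

end


context om
begin

lemma relint_eq: "relint_dom HH \<Omega> = {x. pos x}" using relint_pos by auto

lemma leg_diff: assumes "pos x" shows "wv differentiable (at x within HH)"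
  using leg assms unfolding legendre_on_def Let_def relint_eq wv_eta by auto

lemma leg_blow:
  assumes "\<forall>k. pos (u k) \<and> (wv has_derivative Df k) (at (u k) within HH)"
    and "u \<longlonglongrightarrow> b" and "b \<in> prob_simplex" and "\<not> pos b"
  shows "filterlim (\<lambda>k. gnorm HH (Df k)) at_top sequentially"
proof -
  have "b \<in> closure (edom \<Omega>) - relint_dom HH \<Omega>"
    using assms(3,4) dom closure_subset relint_eq by auto
  then show ?thesis
    using leg assms(1,2) unfolding legendre_on_def Let_def wv_eta relint_eq by blast
qed

definition Dg :: "real^'y \<Rightarrow> real^'y \<Rightarrow> real" where
  "Dg x = (SOME D. (wv has_derivative D) (at x within HH))"

lemma Dg: assumes "pos x" shows "(wv has_derivative Dg x) (at x within HH)"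
proof -
  have "\<exists>D. (wv has_derivative D) (at x within HH)" using leg_diff[OF assms] by (simp add: differentiable_def)
  then show ?thesis unfolding Dg_def by (rule someI_ex)
qed

lemma ctr_pos: "pos ctr" unfolding pos_def by (intro conjI ctr_simplex allI) (simp add: ctr_def)

lemma pos_comb: assumes "b \<in> prob_simplex" "0 < l" "l \<le> 1" shows "pos (b + l *\<^sub>R (ctr - b))"
proof -
  have e: "b + l *\<^sub>R (ctr - b) = l *\<^sub>R ctr + (1 - l) *\<^sub>R b" by (simp add: algebra_simps)
  have s: "b + l *\<^sub>R (ctr - b) \<in> prob_simplex"
    unfolding e using assms by (intro convexD[OF convex_simplex ctr_simplex]) auto
  have "0 < (b + l *\<^sub>R (ctr - b)) $ y" for y
  proof -
    have "(b + l *\<^sub>R (ctr - b)) $ y = l * (1 / real CARD('y)) + (1 - l) * b $ y"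
      by (simp add: ctr_def algebra_simps)
    moreover have "0 \<le> (1 - l) * b $ y" using assms by (simp add: prob_simplex_def)
    moreover have "0 < l * (1 / real CARD('y))" using assms by simp
    ultimately show ?thesis by linarith
  qed
  then show ?thesis using s by (simp add: pos_def)
qed

lemma dir_scale: assumes "x \<in> prob_simplex" "z \<in> prob_simplex" shows "c *\<^sub>R (x - z) \<in> dir HH"
proof -
  have "c *\<^sub>R x + (1 - c) *\<^sub>R z \<in> HH"
    by (rule mem_affine[OF affine_affine_hull]) (auto intro: hull_inc assms)
  moreover have "z \<in> HH" using assms by (auto intro: hull_inc)
  moreover have "c *\<^sub>R (x - z) = (c *\<^sub>R x + (1 - c) *\<^sub>R z) - z" by (simp add: algebra_simps)
  ultimately show ?thesis unfolding dir_def by blast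
qed

lemma dir_neg: assumes "w \<in> dir HH" shows "- w \<in> dir HH"
proof -
  obtain x y where "w = x - y" "x \<in> HH" "y \<in> HH" using assms unfolding dir_def by blast
  then have "- w = y - x" by simp
  then show ?thesis unfolding dir_def using \<open>x \<in> HH\<close> \<open>y \<in> HH\<close> by blast
qed

end


context om begin
lemma min_pos:
  assumes bs: "b \<in> prob_simplex" and mn: "\<forall>x\<in>prob_simplex. wv b - v \<bullet> b \<le> wv x - v \<bullet> x"
  shows "pos b"
proof (rule ccontr)
  assume nb: "\<not> pos b"
  then obtain y where "\<not> 0 < b $ y" using bs by (auto simp: pos_def)
  moreover have "0 \<le> b $ y" using bs by (simp add: prob_simplex_def)
  ultimately have y0: "b $ y = 0" by simp
  define lam :: "nat \<Rightarrow> real" where "lam k = 1 / (real k + 2)" for k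
  have lam: "0 < lam k" "lam k \<le> 1" for k by (auto simp: lam_def)
  define u where "u k = b + lam k *\<^sub>R (ctr - b)" for k
  have upos: "pos (u k)" for k unfolding u_def using pos_comb[OF bs lam(1) lam(2)] .
  have "lam \<longlonglongrightarrow> 0"
  proof -
    have "(\<lambda>k. 1 / real (Suc (Suc k))) \<longlonglongrightarrow> 0"
      using LIMSEQ_Suc[OF LIMSEQ_Suc[OF lim_1_over_n]] .
    moreover have "lam = (\<lambda>k. 1 / real (Suc (Suc k)))" by (simp add: fun_eq_iff lam_def add.commute)
    ultimately show ?thesis by simp
  qed
  then have "u \<longlonglongrightarrow> b + 0 *\<^sub>R (ctr - b)"
    unfolding u_def by (intro tendsto_intros)
  then have ub: "u \<longlonglongrightarrow> b" by simp
  define Df where "Df k = Dg (u k)" for k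
  have Dk: "(wv has_derivative Df k) (at (u k) within HH)" for k
    unfolding Df_def using Dg[OF upos] .
  have lim: "filterlim (\<lambda>k. gnorm HH (Df k)) at_top sequentially"
    using leg_blow[OF _ ub bs nb] Dk upos by blast
  define n where "n = real CARD('y)"
  have n1: "n \<ge> 1" unfolding n_def by (simp add: Suc_leI)
  define K where "K = n * (2 * Bnd + \<bar>v \<bullet> (ctr - b)\<bar>)"
  have one: "Df k w \<le> K" if w: "w \<in> dir HH" "norm w = 1" for k w
  proof -
    have lin: "linear (Df k)" using has_derivative_linear[OF Dk] .
    have us: "u k \<in> prob_simplex" using upos by (simp add: pos_def)
    define xw where "xw = ctr + (1 / n) *\<^sub>R w"
    have xw: "xw \<in> prob_simplex"
    proof -
      have "0 \<le> xw $ z" for z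
      proof -
        have "\<bar>w $ z\<bar> \<le> 1" using component_le_norm_cart[of w z] w by simp
        then have "(1 / n) * (-1) \<le> (1 / n) * w $ z" using n1
          by (intro mult_left_mono) auto
        then have "- (1 / n) \<le> (1 / n) * w $ z" by simp
        then show ?thesis by (simp add: xw_def ctr_def n_def)
      qed
      moreover have "(\<Sum>z\<in>UNIV. xw $ z) = 1"
        using dir_sum0[OF w(1)] by (simp add: xw_def sum.distrib ctr_def sum_distrib_left[symmetric] sum_divide_distrib[symmetric])
      ultimately show ?thesis by (simp add: prob_simplex_def)
    qed
    have cb: "v \<bullet> (ctr - b) \<le> Df k (ctr - b)"
    proof -
      have "Df k (b - u k) \<le> wv b - wv (u k)" by (rule subgrad[OF upos Dk bs])
      moreover have "Df k (b - u k) = - lam k * Df k (ctr - b)"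
      proof -
        have bu: "b - u k = (- lam k) *\<^sub>R (ctr - b)" by (simp add: u_def)
        show ?thesis unfolding bu using linear_scale[OF lin, of "- lam k" "ctr - b"] by simp
      qed
      moreover have "wv b - wv (u k) \<le> v \<bullet> (b - u k)"
      proof -
        have "wv b - v \<bullet> b \<le> wv (u k) - v \<bullet> u k" using mn us by blast
        then show ?thesis by (simp add: inner_diff_right)
      qed
      ultimately have "- lam k * Df k (ctr - b) \<le> - lam k * (v \<bullet> (ctr - b))"
        by (simp add: inner_simps u_def algebra_simps)
      then show ?thesis using lam(1)[of k] by simp
    qed
    have "Df k (xw - u k) \<le> wv xw - wv (u k)" by (rule subgrad[OF upos Dk xw])
    also have "\<dots> \<le> 2 * Bnd" using wv_bound[OF xw] wv_bound[OF us] by linarith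
    finally have a: "Df k (xw - u k) \<le> 2 * Bnd" .
    have "xw - u k = (1 - lam k) *\<^sub>R (ctr - b) + (1 / n) *\<^sub>R w"
      by (simp add: xw_def u_def algebra_simps)
    then have "Df k (xw - u k) = (1 - lam k) * Df k (ctr - b) + (1 / n) * Df k w"
      using linear_add[OF lin] linear_scale[OF lin] by simp
    moreover have "(1 - lam k) * Df k (ctr - b) \<ge> (1 - lam k) * (v \<bullet> (ctr - b))"
      using cb lam[of k] by (intro mult_left_mono) auto
    moreover have "(1 - lam k) * (v \<bullet> (ctr - b)) \<ge> - \<bar>v \<bullet> (ctr - b)\<bar>"
    proof -
      have "\<bar>(1 - lam k) * (v \<bullet> (ctr - b))\<bar> \<le> \<bar>v \<bullet> (ctr - b)\<bar>"
        using lam[of k] by (simp add: abs_mult mult_left_le_one_le)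
      then show ?thesis by linarith
    qed
    ultimately have "(1 / n) * Df k w \<le> 2 * Bnd + \<bar>v \<bullet> (ctr - b)\<bar>" using a by linarith
    then show ?thesis using n1 by (simp add: K_def field_simps)
  qed
  have bnd: "gnorm HH (Df k) \<le> K" for k
  proof -
    have "\<exists>y'. b $ y' \<noteq> 0"
    proof (rule ccontr)
      assume "\<nexists>y'. b $ y' \<noteq> 0"
      then have "(\<Sum>z\<in>UNIV. b $ z) = 0" by simp
      then show False using bs by (simp add: prob_simplex_def)
    qed
    then obtain y' where y': "b $ y' \<noteq> 0" by blast
    have yy: "y' \<noteq> y" using y0 y' by auto
    define w0 where "w0 = axis y 1 - axis y' (1::real)"
    have "w0 $ y = 1" using yy by (simp add: w0_def axis_def)
    then have nw: "norm w0 \<noteq> 0" by auto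
    have "(1 / norm w0) *\<^sub>R w0 \<in> dir HH" unfolding w0_def by (rule dir_scale[OF axis_simplex axis_simplex])
    moreover have "norm ((1 / norm w0) *\<^sub>R w0) = 1" using nw by simp
    ultimately have ne: "{\<bar>Df k w\<bar> | w. w \<in> dir HH \<and> norm w = 1} \<noteq> {}" by blast
    have "\<bar>Df k w\<bar> \<le> K" if w: "w \<in> dir HH" "norm w = 1" for w
    proof -
      have lin: "linear (Df k)" using has_derivative_linear[OF Dk] .
      have "Df k (- w) \<le> K" using one[OF dir_neg[OF w(1)]] w by simp
      then have "- Df k w \<le> K" using linear_neg[OF lin] by simp
      with one[OF w, of k] show ?thesis by linarith
    qed
    then show ?thesis unfolding gnorm_def by (intro cSup_least[OF ne]) auto
  qed
  have "\<forall>\<^sub>F k in sequentially. K + 1 \<le> gnorm HH (Df k)"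
    using lim unfolding filterlim_at_top by blast
  then obtain k where "K + 1 \<le> gnorm HH (Df k)" unfolding eventually_sequentially by blast
  with bnd[of k] show False by linarith
qed

end



lemma lin_repr:
  fixes f :: "real^'y::finite \<Rightarrow> real"
  assumes "linear f" shows "f x = (\<chi> i. f (axis i 1)) \<bullet> x"
proof -
  have "f x = f (\<Sum>i\<in>UNIV. (x $ i) *\<^sub>R axis i 1)"
    using basis_expansion[of x] by (simp add: scalar_mult_eq_scaleR)
  also have "\<dots> = (\<Sum>i\<in>UNIV. x $ i * f (axis i 1))"
    by (subst linear_sum[OF assms]) (simp add: linear_scale[OF assms])
  also have "\<dots> = (\<chi> i. f (axis i 1)) \<bullet> x" by (simp add: inner_vec_def mult.commute)
  finally show ?thesis .
qed

context om
begin

definition ws :: "real^'y \<Rightarrow> real" where "ws s = real_of_ereal (fconj \<Omega> s)"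

lemma fconj_term: "ereal (s \<bullet> q) - \<Omega> q = (if q \<in> prob_simplex then ereal (s \<bullet> q - wv q) else -\<infinity>)"
  using Om_fin[of q] Om_out[of q] by auto

lemma fconj_fin: "fconj \<Omega> s = ereal (ws s)"
proof -
  have up: "fconj \<Omega> s \<le> ereal (norm s + Bnd)"
    unfolding fconj_def
  proof (rule SUP_least)
    fix q
    show "ereal (s \<bullet> q) - \<Omega> q \<le> ereal (norm s + Bnd)"
    proof (cases "q \<in> prob_simplex")
      case True
      have "s \<bullet> q \<le> norm s * norm q" using Cauchy_Schwarz_ineq2[of s q] by simp
      also have "\<dots> \<le> norm s * 1" using simplex_norm_le1[OF True] by (intro mult_left_mono) auto
      finally have "s \<bullet> q \<le> norm s" by simp
      moreover have "- wv q \<le> Bnd" using wv_bound[OF True] by linarith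
      ultimately show ?thesis using True fconj_term[of s q] by simp
    qed (simp add: fconj_term)
  qed
  have lo: "ereal (s \<bullet> ctr - wv ctr) \<le> fconj \<Omega> s"
    unfolding fconj_def using fconj_term[of s ctr] ctr_simplex
    by (metis (no_types, lifting) SUP_upper UNIV_I)
  from up lo show ?thesis unfolding ws_def by (cases "fconj \<Omega> s") auto
qed

lemma FY_ineq: assumes "x \<in> prob_simplex" shows "s \<bullet> x - wv x \<le> ws s"
proof -
  have "ereal (s \<bullet> x - wv x) \<le> fconj \<Omega> s"
    unfolding fconj_def using fconj_term[of s x] assms
    by (metis (no_types, lifting) SUP_upper UNIV_I)
  then show ?thesis using fconj_fin by simp
qed

lemma attain:
  assumes a: "a \<in> prob_simplex" and sg: "\<forall>z\<in>prob_simplex. wv a + g \<bullet> (z - a) \<le> wv z"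
  shows "ws g = g \<bullet> a - wv a"
proof -
  have "fconj \<Omega> g \<le> ereal (g \<bullet> a - wv a)"
    unfolding fconj_def
  proof (rule SUP_least)
    fix q
    show "ereal (g \<bullet> q) - \<Omega> q \<le> ereal (g \<bullet> a - wv a)"
    proof (cases "q \<in> prob_simplex")
      case True
      then have "wv a + g \<bullet> (q - a) \<le> wv q" using sg by blast
      then have "g \<bullet> q - wv q \<le> g \<bullet> a - wv a" by (simp add: inner_diff_right)
      then show ?thesis using True fconj_term[of g q] by simp
    qed (simp add: fconj_term)
  qed
  then have "ws g \<le> g \<bullet> a - wv a" using fconj_fin by simp
  with FY_ineq[OF a, of g] show ?thesis by simp
qed

definition grad :: "real^'y \<Rightarrow> real^'y" where "grad x = (\<chi> i. Dg x (axis i 1))"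

lemma grad_sub: assumes "pos a" shows "\<forall>z\<in>prob_simplex. wv a + grad a \<bullet> (z - a) \<le> wv z"
proof
  fix z :: "real^'y" assume z: "z \<in> prob_simplex"
  have lin: "linear (Dg a)" using has_derivative_linear[OF Dg[OF assms]] .
  have "Dg a (z - a) \<le> wv z - wv a" by (rule subgrad[OF assms Dg[OF assms] z])
  then show "wv a + grad a \<bullet> (z - a) \<le> wv z" using lin_repr[OF lin, of "z - a"] by (simp add: grad_def)
qed

end


context om
begin

definition avg :: "nat \<Rightarrow> (nat \<Rightarrow> real^'y) \<Rightarrow> real^'y" where
  "avg N p = (1 / real N) *\<^sub>R (\<Sum>i<N. p i)"
definition Jg :: "nat \<Rightarrow> (nat \<Rightarrow> real^'y) \<Rightarrow> real" where
  "Jg N p = (1 / real N) * (\<Sum>i<N. wv (p i)) - wv (avg N p)"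
definition Phr :: "nat \<Rightarrow> real \<Rightarrow> (nat \<Rightarrow> real^'y) \<Rightarrow> real^'y \<Rightarrow> (nat \<Rightarrow> real^'y) \<Rightarrow> real" where
  "Phr N \<kappa> g s p = (1 / real N) * (\<Sum>i<N. g i \<bullet> p i + \<kappa> * (wv (p i) + ws s - s \<bullet> p i))"
definition Fr :: "nat \<Rightarrow> real \<Rightarrow> (nat \<Rightarrow> real^'y) \<Rightarrow> (nat \<Rightarrow> real^'y) \<Rightarrow> real" where
  "Fr N \<kappa> g p = (1 / real N) * (\<Sum>i<N. g i \<bullet> p i + \<kappa> * wv (p i)) - \<kappa> * wv (avg N p)"
definition FYr :: "real^'y \<Rightarrow> real^'y \<Rightarrow> real" where
  "FYr s x = wv x + ws s - s \<bullet> x"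

lemma FYr_nonneg: "x \<in> prob_simplex \<Longrightarrow> 0 \<le> FYr s x"
  using FY_ineq[of x s] by (simp add: FYr_def)

lemma avg_simplex: assumes "N \<ge> 1" "\<forall>i<N. p i \<in> prob_simplex" shows "avg N p \<in> prob_simplex"
proof -
  have "0 \<le> avg N p $ y" for y
    using assms by (auto simp: avg_def sum_component prob_simplex_def intro!: sum_nonneg divide_nonneg_nonneg)
  moreover have "(\<Sum>y\<in>UNIV. avg N p $ y) = 1"
  proof -
    have "(\<Sum>y\<in>UNIV. avg N p $ y) = (1 / real N) * (\<Sum>i<N. \<Sum>y\<in>UNIV. p i $ y)"
      by (simp add: avg_def sum_component sum_divide_distrib[symmetric] sum.swap[of _ UNIV])
    also have "\<dots> = (1 / real N) * (\<Sum>i<N. 1)"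
      using assms by (intro arg_cong[where f = "\<lambda>z. (1 / real N) * z"] sum.cong) (auto simp: prob_simplex_def)
    also have "\<dots> = 1" using assms by simp
    finally show ?thesis .
  qed
  ultimately show ?thesis by (simp add: prob_simplex_def)
qed

lemma avg_pos: assumes "N \<ge> 1" "\<forall>i<N. pos (p i)" shows "pos (avg N p)"
proof -
  have s: "avg N p \<in> prob_simplex" using avg_simplex assms by (auto simp: pos_def)
  have "0 < avg N p $ y" for y
  proof -
    have "0 < (\<Sum>i<N. p i $ y)"
      using assms by (intro sum_pos) (auto simp: pos_def lessThan_empty_iff)
    then show ?thesis using assms by (simp add: avg_def sum_component)
  qed
  then show ?thesis using s by (simp add: pos_def)
qed

lemma inner_avg: "s \<bullet> avg N p = (1 / real N) * (\<Sum>i<N. s \<bullet> p i)"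
  by (simp add: avg_def inner_sum_right)

lemma Phr_split: assumes "N \<ge> 1" shows "Phr N \<kappa> g s p = Fr N \<kappa> g p + \<kappa> * FYr s (avg N p)"
proof -
  have "Phr N \<kappa> g s p = (1 / real N) * (\<Sum>i<N. g i \<bullet> p i + \<kappa> * wv (p i))
      + (1 / real N) * (\<Sum>i<N. \<kappa> * ws s) - \<kappa> * ((1 / real N) * (\<Sum>i<N. s \<bullet> p i))"
    by (simp add: Phr_def sum.distrib sum_subtractf algebra_simps sum_distrib_left)
  also have "(1 / real N) * (\<Sum>i<N. \<kappa> * ws s) = \<kappa> * ws s" using assms by simp
  finally show ?thesis by (simp add: Fr_def FYr_def inner_avg algebra_simps)
qed

lemma SN_eq:
  assumes "\<forall>i<N. p i \<in> prob_simplex"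
  shows "S_N \<Omega> \<kappa> N g (\<lambda>i. s) p = ereal (Phr N \<kappa> g s p)"
proof -
  have "S_single \<Omega> \<kappa> (g i) s (p i) = ereal (g i \<bullet> p i + \<kappa> * (wv (p i) + ws s - s \<bullet> p i))" if "i < N" for i
    using assms that Om_fin[of "p i"] fconj_fin[of s] by (simp add: S_single_def fy_loss_def)
  then have "(\<Sum>i<N. S_single \<Omega> \<kappa> (g i) s (p i)) = (\<Sum>i<N. ereal (g i \<bullet> p i + \<kappa> * (wv (p i) + ws s - s \<bullet> p i)))"
    by (intro sum.cong) auto
  also have "\<dots> = ereal (\<Sum>i<N. g i \<bullet> p i + \<kappa> * (wv (p i) + ws s - s \<bullet> p i))" by simp
  finally show ?thesis by (simp add: S_N_def Phr_def)
qed

end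


context om
begin

lemma Phr_upd:
  assumes "i < N"
  shows "Phr N \<kappa> g s (p(i := x)) = Phr N \<kappa> g s p
     + (1 / real N) * ((g i \<bullet> x + \<kappa> * (wv x + ws s - s \<bullet> x)) - (g i \<bullet> p i + \<kappa> * (wv (p i) + ws s - s \<bullet> p i)))"
proof -
  define f where "f j y = g j \<bullet> y + \<kappa> * (wv y + ws s - s \<bullet> y)" for j y
  have a: "(\<Sum>j<N. f j ((p(i := x)) j)) = f i x + (\<Sum>j\<in>{..<N} - {i}. f j (p j))"
    using assms by (subst sum.remove[of _ i]) auto
  have b: "(\<Sum>j<N. f j (p j)) = f i (p i) + (\<Sum>j\<in>{..<N} - {i}. f j (p j))"
    using assms by (subst sum.remove[of _ i]) auto
  have "Phr N \<kappa> g s (p(i := x)) = (1 / real N) * (\<Sum>j<N. f j ((p(i := x)) j))"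
    by (simp add: Phr_def f_def)
  also have "\<dots> = (1 / real N) * (\<Sum>j<N. f j (p j)) + (1 / real N) * (f i x - f i (p i))"
    using a b by (simp add: algebra_simps)
  also have "(1 / real N) * (\<Sum>j<N. f j (p j)) = Phr N \<kappa> g s p" by (simp add: Phr_def f_def)
  finally show ?thesis by (simp add: f_def fun_upd_def)
qed

lemma coord_min:
  assumes kp: "\<kappa> > 0" and N1: "N \<ge> 1" and i: "i < N" and qs: "\<forall>i<N. q' i \<in> prob_simplex"
    and qmin: "\<forall>p. (\<forall>i<N. p i \<in> prob_simplex) \<longrightarrow> Phr N \<kappa> g \<sigma> q' \<le> Phr N \<kappa> g \<sigma> p"
  shows "\<forall>x\<in>prob_simplex. wv (q' i) - (\<sigma> - (1 / \<kappa>) *\<^sub>R g i) \<bullet> q' i \<le> wv x - (\<sigma> - (1 / \<kappa>) *\<^sub>R g i) \<bullet> x"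
proof
  fix x :: "real^'y" assume x: "x \<in> prob_simplex"
  have "\<forall>j<N. (q'(i := x)) j \<in> prob_simplex" using qs x by auto
  then have "Phr N \<kappa> g \<sigma> q' \<le> Phr N \<kappa> g \<sigma> (q'(i := x))" using qmin by blast
  then have "0 \<le> (1 / real N) * ((g i \<bullet> x + \<kappa> * (wv x + ws \<sigma> - \<sigma> \<bullet> x)) - (g i \<bullet> q' i + \<kappa> * (wv (q' i) + ws \<sigma> - \<sigma> \<bullet> q' i)))"
    using Phr_upd[OF i] by simp
  then have "0 \<le> (g i \<bullet> x + \<kappa> * (wv x + ws \<sigma> - \<sigma> \<bullet> x)) - (g i \<bullet> q' i + \<kappa> * (wv (q' i) + ws \<sigma> - \<sigma> \<bullet> q' i))"
    using N1 by (simp add: zero_le_divide_iff)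
  then have "0 \<le> \<kappa> * ((wv x - (\<sigma> - (1 / \<kappa>) *\<^sub>R g i) \<bullet> x) - (wv (q' i) - (\<sigma> - (1 / \<kappa>) *\<^sub>R g i) \<bullet> q' i))"
    using kp by (simp add: inner_diff_left algebra_simps)
  then show "wv (q' i) - (\<sigma> - (1 / \<kappa>) *\<^sub>R g i) \<bullet> q' i \<le> wv x - (\<sigma> - (1 / \<kappa>) *\<^sub>R g i) \<bullet> x"
    using kp by (simp add: zero_le_mult_iff)
qed

lemma avg_comb: "avg N (\<lambda>i. t *\<^sub>R p i + (1 - t) *\<^sub>R p' i) = avg N p' + t *\<^sub>R (avg N p - avg N p')"
proof -
  have e: "(\<Sum>i<N. t *\<^sub>R p i + (1 - t) *\<^sub>R p' i) = t *\<^sub>R (\<Sum>i<N. p i) + (1 - t) *\<^sub>R (\<Sum>i<N. p' i)"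
    by (simp add: sum.distrib scaleR_sum_right)
  show ?thesis unfolding avg_def e by (simp add: algebra_simps)
qed

lemma jensen_deriv:
  assumes N1: "N \<ge> 1"
    and jc: "\<forall>p p' t. (\<forall>i<N. p i \<in> prob_simplex) \<and> (\<forall>i<N. p' i \<in> prob_simplex) \<and> 0 \<le> t \<and> t \<le> 1
         \<longrightarrow> Jg N (\<lambda>i. t *\<^sub>R p i + (1 - t) *\<^sub>R p' i) \<le> t * Jg N p + (1 - t) * Jg N p'"
    and qp: "\<forall>i<N. pos (q' i)" and qo: "\<forall>i<N. qo i \<in> prob_simplex"
  shows "(1 / real N) * (\<Sum>i<N. Dg (q' i) (qo i - q' i)) - Dg (avg N q') (avg N qo - avg N q')
          \<le> Jg N qo - Jg N q'"
proof -
  define a where "a = avg N q'"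
  define db where "db = avg N qo - a"
  have qs: "\<forall>i<N. q' i \<in> prob_simplex" using qp by (simp add: pos_def)
  have ap: "pos a" unfolding a_def using avg_pos[OF N1 qp] .
  have as: "a \<in> prob_simplex" using ap by (simp add: pos_def)
  have dbs: "(\<Sum>y\<in>UNIV. db $ y) = 0"
    unfolding db_def a_def by (rule sum_diff0[OF avg_simplex[OF N1 qo] avg_simplex[OF N1 qs]])
  define Q where "Q t = (1 / real N) * (\<Sum>i<N. (wv (q' i + t *\<^sub>R (qo i - q' i)) - wv (q' i)) / t)
      - (wv (a + t *\<^sub>R db) - wv a) / t" for t
  have lim: "(Q \<longlongrightarrow> (1 / real N) * (\<Sum>i<N. Dg (q' i) (qo i - q' i)) - Dg a db) (at_right 0)"
    unfolding Q_def
  proof (intro tendsto_diff tendsto_mult tendsto_const tendsto_sum)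
    fix i assume "i \<in> {..<N}"
    then have i: "i < N" by simp
    show "((\<lambda>t. (wv (q' i + t *\<^sub>R (qo i - q' i)) - wv (q' i)) / t) \<longlongrightarrow> Dg (q' i) (qo i - q' i)) (at_right 0)"
      using qp qo i by (intro dir_limit Dg sum_diff0) (auto simp: pos_def)
  next
    show "((\<lambda>t. (wv (a + t *\<^sub>R db) - wv a) / t) \<longlongrightarrow> Dg a db) (at_right 0)"
      by (rule dir_limit[OF ap Dg[OF ap] dbs])
  qed
  have ev: "\<forall>\<^sub>F t in at_right 0. Q t \<le> Jg N qo - Jg N q'"
    unfolding eventually_at_right_field
  proof (intro exI[of _ 1] conjI allI impI)
    fix t :: real assume t: "0 < t" "t < 1"
    have pt: "(\<lambda>i. t *\<^sub>R qo i + (1 - t) *\<^sub>R q' i) = (\<lambda>i. q' i + t *\<^sub>R (qo i - q' i))"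
      by (simp add: fun_eq_iff algebra_simps)
    have "Jg N (\<lambda>i. t *\<^sub>R qo i + (1 - t) *\<^sub>R q' i) \<le> t * Jg N qo + (1 - t) * Jg N q'"
      using jc qo qs t by auto
    moreover have "Jg N (\<lambda>i. t *\<^sub>R qo i + (1 - t) *\<^sub>R q' i)
        = (1 / real N) * (\<Sum>i<N. wv (q' i + t *\<^sub>R (qo i - q' i))) - wv (a + t *\<^sub>R db)"
    proof -
      have av: "avg N (\<lambda>i. t *\<^sub>R qo i + (1 - t) *\<^sub>R q' i) = a + t *\<^sub>R db"
        by (simp add: avg_comb a_def db_def)
      have pti: "\<And>i. t *\<^sub>R qo i + (1 - t) *\<^sub>R q' i = q' i + t *\<^sub>R (qo i - q' i)"
        by (simp add: algebra_simps)
      show ?thesis unfolding Jg_def av unfolding pti by simp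
    qed
    ultimately have "(1 / real N) * (\<Sum>i<N. wv (q' i + t *\<^sub>R (qo i - q' i))) - wv (a + t *\<^sub>R db) - Jg N q'
        \<le> t * (Jg N qo - Jg N q')" by (simp add: algebra_simps)
    moreover have "Q t * t = (1 / real N) * (\<Sum>i<N. wv (q' i + t *\<^sub>R (qo i - q' i))) - wv (a + t *\<^sub>R db) - Jg N q'"
    proof -
      define SA where "SA = (\<Sum>i<N. wv (q' i + t *\<^sub>R (qo i - q' i)))"
      define SB where "SB = (\<Sum>i<N. wv (q' i))"
      have "(\<Sum>i<N. (wv (q' i + t *\<^sub>R (qo i - q' i)) - wv (q' i)) / t) = (SA - SB) / t"
        by (simp add: SA_def SB_def sum_divide_distrib[symmetric] sum_subtractf)
      then have "Q t = (1 / real N) * ((SA - SB) / t) - (wv (a + t *\<^sub>R db) - wv a) / t"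
        by (simp add: Q_def)
      then have "Q t * t = ((1 / real N) * ((SA - SB) / t) - (wv (a + t *\<^sub>R db) - wv a) / t) * t"
        by simp
      also have "\<dots> = (1 / real N) * (SA - SB) - (wv (a + t *\<^sub>R db) - wv a)"
        using t N1 by (simp add: field_simps)
      finally have "Q t * t = (1 / real N) * (SA - SB) - (wv (a + t *\<^sub>R db) - wv a)" .
      moreover have "Jg N q' = (1 / real N) * SB - wv a" by (simp add: Jg_def SB_def a_def)
      ultimately show ?thesis by (simp add: SA_def algebra_simps)
    qed
    ultimately have "Q t * t \<le> (Jg N qo - Jg N q') * t" by (simp add: mult.commute)
    then show "Q t \<le> Jg N qo - Jg N q'" using t by simp
  qed simp
  show ?thesis using tendsto_upperbound[OF lim ev] unfolding a_def db_def by simp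
qed

end


context om
begin

lemma step:
  assumes kp: "\<kappa> > 0" and N1: "N \<ge> 1"
    and jc: "\<forall>p p' t. (\<forall>i<N. p i \<in> prob_simplex) \<and> (\<forall>i<N. p' i \<in> prob_simplex) \<and> 0 \<le> t \<and> t \<le> 1
         \<longrightarrow> Jg N (\<lambda>i. t *\<^sub>R p i + (1 - t) *\<^sub>R p' i) \<le> t * Jg N p + (1 - t) * Jg N p'"
    and qs: "\<forall>i<N. q' i \<in> prob_simplex"
    and qmin: "\<forall>p. (\<forall>i<N. p i \<in> prob_simplex) \<longrightarrow> Phr N \<kappa> g \<sigma> q' \<le> Phr N \<kappa> g \<sigma> p"
    and smin: "\<forall>s. Phr N \<kappa> g \<sigma>' q' \<le> Phr N \<kappa> g s q'"
    and qo: "\<forall>i<N. qo i \<in> prob_simplex"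
  shows "Phr N \<kappa> g \<sigma>' q' + \<kappa> * FYr \<sigma>' (avg N qo) \<le> Fr N \<kappa> g qo + \<kappa> * FYr \<sigma> (avg N qo)"
proof -
  define v where "v i = \<sigma> - (1 / \<kappa>) *\<^sub>R g i" for i
  define d where "d i = qo i - q' i" for i
  define a where "a = avg N q'"
  define x where "x = avg N qo"
  define db where "db = x - a"
  have cm: "\<forall>z\<in>prob_simplex. wv (q' i) - v i \<bullet> q' i \<le> wv z - v i \<bullet> z" if "i < N" for i
    unfolding v_def by (rule coord_min[OF kp N1 that qs qmin])
  have qp: "\<forall>i<N. pos (q' i)" using min_pos qs cm by blast
  have ap: "pos a" unfolding a_def using avg_pos[OF N1 qp] .
  have as: "a \<in> prob_simplex" using ap by (simp add: pos_def)
  have xs: "x \<in> prob_simplex" unfolding x_def using avg_simplex[OF N1 qo] .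
  have fo: "\<sigma> \<bullet> d i - (1 / \<kappa>) * (g i \<bullet> d i) \<le> Dg (q' i) (d i)" if i: "i < N" for i
  proof -
    have "v i \<bullet> (qo i - q' i) \<le> Dg (q' i) (qo i - q' i)"
      using qp i qo cm[OF i] by (intro firstorder Dg) auto
    then show ?thesis by (simp add: v_def d_def inner_diff_left)
  qed
  have FY0: "FYr (grad a) a = 0"
    using attain[OF as grad_sub[OF ap]] by (simp add: FYr_def)
  have "Phr N \<kappa> g \<sigma>' q' \<le> Phr N \<kappa> g (grad a) q'" using smin by blast
  then have "\<kappa> * FYr \<sigma>' a \<le> \<kappa> * FYr (grad a) a" using Phr_split[OF N1] by (simp add: a_def)
  then have "FYr \<sigma>' a \<le> 0" using FY0 kp by (simp add: mult_le_0_iff)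
  then have FYs': "FYr \<sigma>' a = 0" using FYr_nonneg[OF as, of \<sigma>'] by simp
  then have wss: "ws \<sigma>' = \<sigma>' \<bullet> a - wv a" by (simp add: FYr_def)
  have sg: "\<forall>z\<in>prob_simplex. wv a + \<sigma>' \<bullet> (z - a) \<le> wv z"
  proof
    fix z :: "real^'y" assume z: "z \<in> prob_simplex"
    show "wv a + \<sigma>' \<bullet> (z - a) \<le> wv z" using FY_ineq[OF z, of \<sigma>'] wss by (simp add: inner_diff_right)
  qed
  have dbs: "(\<Sum>y\<in>UNIV. db $ y) = 0" unfolding db_def by (rule sum_diff0[OF xs as])
  have Da: "Dg a db = \<sigma>' \<bullet> db" by (rule subgrad_eq[OF ap Dg[OF ap] sg dbs])
  have J: "(1 / real N) * (\<Sum>i<N. Dg (q' i) (d i)) - \<sigma>' \<bullet> db \<le> Jg N qo - Jg N q'"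
    using jensen_deriv[OF N1 jc qp qo] Da by (simp add: a_def x_def db_def d_def)
  define Sg where "Sg = (\<Sum>i<N. g i \<bullet> d i)"
  define SD where "SD = (\<Sum>i<N. Dg (q' i) (d i))"
  define Ss where "Ss = (\<Sum>i<N. \<sigma> \<bullet> d i)"
  have S1: "Ss - (1 / \<kappa>) * Sg \<le> SD"
  proof -
    have "(\<Sum>i<N. \<sigma> \<bullet> d i - (1 / \<kappa>) * (g i \<bullet> d i)) \<le> SD"
      unfolding SD_def by (intro sum_mono fo) auto
    then show ?thesis by (simp add: Ss_def Sg_def sum_subtractf sum_distrib_left)
  qed
  have S1': "\<kappa> * Ss - Sg \<le> \<kappa> * SD"
  proof -
    have "\<kappa> * (Ss - (1 / \<kappa>) * Sg) \<le> \<kappa> * SD" using S1 kp by (intro mult_left_mono) auto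
    then show ?thesis using kp by (simp add: algebra_simps)
  qed
  have Ssdb: "(1 / real N) * Ss = \<sigma> \<bullet> db"
    by (simp add: Ss_def d_def db_def x_def a_def inner_avg inner_diff_right sum_subtractf algebra_simps)
  have Fdiff: "Fr N \<kappa> g qo - Fr N \<kappa> g q' = (1 / real N) * Sg + \<kappa> * (Jg N qo - Jg N q')"
    by (simp add: Fr_def Jg_def Sg_def d_def inner_diff_right sum_subtractf sum.distrib algebra_simps sum_distrib_left)
  have "\<kappa> * ((1 / real N) * SD - \<sigma>' \<bullet> db) \<le> \<kappa> * (Jg N qo - Jg N q')"
    using J kp by (intro mult_left_mono) (auto simp: SD_def)
  then have A: "Fr N \<kappa> g qo - Fr N \<kappa> g q' \<ge> (1 / real N) * Sg + \<kappa> * ((1 / real N) * SD) - \<kappa> * (\<sigma>' \<bullet> db)"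
    unfolding Fdiff by (simp add: algebra_simps)
  have B: "(1 / real N) * Sg + \<kappa> * ((1 / real N) * SD) \<ge> (1 / real N) * (\<kappa> * Ss)"
  proof -
    have "(1 / real N) * (\<kappa> * Ss - Sg) \<le> (1 / real N) * (\<kappa> * SD)"
      using S1' by (intro mult_left_mono) auto
    then show ?thesis by (simp add: algebra_simps)
  qed
  have C: "(1 / real N) * (\<kappa> * Ss) = \<kappa> * (\<sigma> \<bullet> db)" using Ssdb by (metis mult.left_commute)
  have Phi': "Phr N \<kappa> g \<sigma>' q' = Fr N \<kappa> g q'" using Phr_split[OF N1] FYs' by (simp add: a_def)
  have Dd: "\<sigma> \<bullet> a - wv a \<le> ws \<sigma>" by (rule FY_ineq[OF as])
  have E: "\<kappa> * (\<sigma> \<bullet> a - wv a) \<le> \<kappa> * ws \<sigma>" using Dd kp by (intro mult_left_mono) auto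
  have "\<kappa> * FYr \<sigma>' x - \<kappa> * FYr \<sigma> x = \<kappa> * (\<sigma> \<bullet> x) - \<kappa> * (\<sigma>' \<bullet> db) - \<kappa> * wv a - \<kappa> * ws \<sigma>"
    unfolding FYr_def wss by (simp add: db_def inner_diff_right algebra_simps)
  moreover have "\<kappa> * (\<sigma> \<bullet> x) = \<kappa> * (\<sigma> \<bullet> db) + \<kappa> * (\<sigma> \<bullet> a)"
    by (simp add: db_def inner_diff_right algebra_simps)
  moreover have E': "\<kappa> * (\<sigma> \<bullet> a) - \<kappa> * wv a \<le> \<kappa> * ws \<sigma>" using E by (simp add: right_diff_distrib)
  ultimately show ?thesis using A B C Phi' unfolding x_def by linarith
qed

end


context om
begin

lemma main_gen:
  assumes kp: "\<kappa> > 0" and N1: "N \<ge> 1"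
    and jc: "\<forall>p p' t. (\<forall>i<N. p i \<in> prob_simplex) \<and> (\<forall>i<N. p' i \<in> prob_simplex) \<and> 0 \<le> t \<and> t \<le> 1
         \<longrightarrow> Jg N (\<lambda>i. t *\<^sub>R p i + (1 - t) *\<^sub>R p' i) \<le> t * Jg N p + (1 - t) * Jg N p'"
    and q_step: "\<forall>t. (\<forall>i<N. q (Suc t) i \<in> prob_simplex) \<and>
         (\<forall>p. (\<forall>i<N. p i \<in> prob_simplex) \<longrightarrow>
            S_N \<Omega> \<kappa> N g (\<lambda>i. sbar t) (q (Suc t)) \<le> S_N \<Omega> \<kappa> N g (\<lambda>i. sbar t) p)"
    and s_step: "\<forall>t. \<forall>s. S_N \<Omega> \<kappa> N g (\<lambda>i. sbar (Suc t)) (q (Suc t)) \<le> S_N \<Omega> \<kappa> N g (\<lambda>i. s) (q (Suc t))"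
  shows "\<exists>C::real. \<forall>\<^sub>F t in sequentially.
           S_N \<Omega> \<kappa> N g (\<lambda>i. sbar t) (q t)
           - (INF sp \<in> {(s, p). (\<forall>i<N. p i \<in> prob_simplex)}. S_N \<Omega> \<kappa> N g (\<lambda>i. fst sp) (snd sp))
           \<le> ereal (C / real t)"
proof -
  define V where "V t = Phr N \<kappa> g (sbar t) (q t)" for t
  have qs: "\<forall>i<N. q (Suc t) i \<in> prob_simplex" for t using q_step by blast
  have qmin: "\<forall>p. (\<forall>i<N. p i \<in> prob_simplex) \<longrightarrow> Phr N \<kappa> g (sbar t) (q (Suc t)) \<le> Phr N \<kappa> g (sbar t) p" for t
  proof (intro allI impI)
    fix p :: "nat \<Rightarrow> real^'y" assume p: "\<forall>i<N. p i \<in> prob_simplex"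
    have "S_N \<Omega> \<kappa> N g (\<lambda>i. sbar t) (q (Suc t)) \<le> S_N \<Omega> \<kappa> N g (\<lambda>i. sbar t) p" using q_step p by blast
    then show "Phr N \<kappa> g (sbar t) (q (Suc t)) \<le> Phr N \<kappa> g (sbar t) p" using SN_eq[OF p] SN_eq[OF qs[of t]] by simp
  qed
  have smin: "\<forall>s. Phr N \<kappa> g (sbar (Suc t)) (q (Suc t)) \<le> Phr N \<kappa> g s (q (Suc t))" for t
  proof
    fix s
    have "S_N \<Omega> \<kappa> N g (\<lambda>i. sbar (Suc t)) (q (Suc t)) \<le> S_N \<Omega> \<kappa> N g (\<lambda>i. s) (q (Suc t))" using s_step by blast
    then show "Phr N \<kappa> g (sbar (Suc t)) (q (Suc t)) \<le> Phr N \<kappa> g s (q (Suc t))" using SN_eq[OF qs[of t]] by simp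
  qed
  have stp: "V (Suc t) + \<kappa> * FYr (sbar (Suc t)) (avg N qo) \<le> Fr N \<kappa> g qo + \<kappa> * FYr (sbar t) (avg N qo)"
    if qo: "\<forall>i<N. qo i \<in> prob_simplex" for t qo
    unfolding V_def by (rule step[OF kp N1 jc qs qmin smin qo])
  have mono: "V (Suc t) \<le> V t" if t: "t \<ge> 1" for t
  proof -
    obtain t' where t': "t = Suc t'" using t by (cases t) auto
    have "V (Suc t) \<le> Phr N \<kappa> g (sbar t) (q (Suc t))" unfolding V_def t' using smin by blast
    also have "\<dots> \<le> V t" unfolding V_def using qmin[of t] qs[of t'] t' by blast
    finally show ?thesis .
  qed
  have mono': "V T \<le> V t" if "1 \<le> t" "t \<le> T" for t T
    using that
  proof (induction T)
    case 0 then show ?case by simp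
  next
    case (Suc T)
    show ?case
    proof (cases "t = Suc T")
      case False
      then have "V T \<le> V t" using Suc by simp
      moreover have "V (Suc T) \<le> V T" using mono[of T] Suc False by simp
      ultimately show ?thesis by simp
    qed simp
  qed
  define C0 where "C0 = Bnd + \<bar>ws (sbar 0)\<bar> + norm (sbar 0)"
  define C where "C = \<kappa> * C0"
  have bound: "V T \<le> Fr N \<kappa> g qo + C / real T" if qo: "\<forall>i<N. qo i \<in> prob_simplex" and T: "T \<ge> 1" for qo T
  proof -
    define x where "x = avg N qo"
    have xs: "x \<in> prob_simplex" unfolding x_def using avg_simplex[OF N1 qo] .
    have tel: "(\<Sum>t\<in>{1..T}. V t) + \<kappa> * FYr (sbar T) x \<le> real T * Fr N \<kappa> g qo + \<kappa> * FYr (sbar 0) x" for T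
    proof (induction T)
      case 0 then show ?case by simp
    next
      case (Suc T)
      have "(\<Sum>t\<in>{1..Suc T}. V t) = (\<Sum>t\<in>{1..T}. V t) + V (Suc T)" by simp
      moreover have "V (Suc T) + \<kappa> * FYr (sbar (Suc T)) x \<le> Fr N \<kappa> g qo + \<kappa> * FYr (sbar T) x"
        unfolding x_def using stp[OF qo] .
      ultimately show ?case using Suc by (simp add: algebra_simps)
    qed
    have "real T * V T = (\<Sum>t\<in>{1..T}. V T)" by simp
    also have "\<dots> \<le> (\<Sum>t\<in>{1..T}. V t)" by (intro sum_mono mono') auto
    finally have "real T * V T \<le> real T * Fr N \<kappa> g qo + \<kappa> * FYr (sbar 0) x - \<kappa> * FYr (sbar T) x"
      using tel[of T] by simp
    moreover have "0 \<le> \<kappa> * FYr (sbar T) x" using FYr_nonneg[OF xs] kp by simp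
    moreover have "\<kappa> * FYr (sbar 0) x \<le> C"
    proof -
      have "FYr (sbar 0) x \<le> C0"
      proof -
        have "wv x \<le> Bnd" using wv_bound[OF xs] by simp
        moreover have "- (sbar 0 \<bullet> x) \<le> norm (sbar 0)"
        proof -
          have "\<bar>sbar 0 \<bullet> x\<bar> \<le> norm (sbar 0) * norm x" by (rule Cauchy_Schwarz_ineq2)
          also have "\<dots> \<le> norm (sbar 0) * 1" using simplex_norm_le1[OF xs] by (intro mult_left_mono) auto
          finally show ?thesis by simp
        qed
        ultimately show ?thesis by (simp add: FYr_def C0_def)
      qed
      then show ?thesis unfolding C_def using kp by (intro mult_left_mono) auto
    qed
    ultimately have "real T * V T \<le> real T * Fr N \<kappa> g qo + C" by linarith
    then show ?thesis using T by (simp add: field_simps)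
  qed
  show ?thesis
  proof (intro exI[of _ C] eventually_sequentiallyI[of 1])
    fix T :: nat assume T: "1 \<le> T"
    obtain T' where T': "T = Suc T'" using T by (cases T) auto
    have SV: "S_N \<Omega> \<kappa> N g (\<lambda>i. sbar T) (q T) = ereal (V T)"
      unfolding V_def T' by (rule SN_eq[OF qs])
    have lb: "ereal (V T - C / real T) \<le> (INF sp \<in> {(s, p). (\<forall>i<N. p i \<in> prob_simplex)}. S_N \<Omega> \<kappa> N g (\<lambda>i. fst sp) (snd sp))"
    proof (rule INF_greatest)
      fix sp :: "(real^'y) \<times> (nat \<Rightarrow> real^'y)" assume "sp \<in> {(s, p). (\<forall>i<N. p i \<in> prob_simplex)}"
      then have p: "\<forall>i<N. snd sp i \<in> prob_simplex" by auto
      have "V T - C / real T \<le> Fr N \<kappa> g (snd sp)" using bound[OF p T] by simp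
      also have "\<dots> \<le> Phr N \<kappa> g (fst sp) (snd sp)"
        using Phr_split[OF N1] FYr_nonneg[OF avg_simplex[OF N1 p]] kp by simp
      finally show "ereal (V T - C / real T) \<le> S_N \<Omega> \<kappa> N g (\<lambda>i. fst sp) (snd sp)"
        using SN_eq[OF p] by simp
    qed
    show "S_N \<Omega> \<kappa> N g (\<lambda>i. sbar T) (q T)
           - (INF sp \<in> {(s, p). (\<forall>i<N. p i \<in> prob_simplex)}. S_N \<Omega> \<kappa> N g (\<lambda>i. fst sp) (snd sp))
           \<le> ereal (C / real T)"
      unfolding SV using lb by (cases "(INF sp \<in> {(s, p). (\<forall>i<N. p i \<in> prob_simplex)}. S_N \<Omega> \<kappa> N g (\<lambda>i. fst sp) (snd sp))") auto
  qed
qed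

end


theorem theorem1:
  fixes emb :: "'y::finite \<Rightarrow> real ^ 'd::finite"
    and \<kappa> :: real and N :: nat
    and \<xi> :: "nat \<Rightarrow> 'xi" and c :: "real ^ 'd \<Rightarrow> 'xi \<Rightarrow> real"
    and \<Omega> \<Psi> :: "real ^ 'y \<Rightarrow> ereal"
    and sbar :: "nat \<Rightarrow> real ^ 'y" and q :: "nat \<Rightarrow> nat \<Rightarrow> real ^ 'y"
  assumes inj: "inj emb"
    and extreme: "\<forall>y. emb y \<notin> convex hull (emb ` (UNIV - {y}))"
    and kappa: "\<kappa> > 0"
    and N: "N \<ge> 1"
    and Omega_proper: "proper_fun \<Omega>" and Omega_lsc: "lsc_fun \<Omega>" and Omega_convex: "econvex \<Omega>"
    and Omega_dom: "edom \<Omega> = prob_simplex"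
    and Omega_legendre_H: "legendre_on (affine hull prob_simplex) \<Omega>"
    and Omega_split: "\<forall>x. \<Omega> x = (if x \<in> prob_simplex then \<Psi> x else \<infinity>)"
    and Psi_legendre: "legendre_on UNIV \<Psi>"
    and jensen_convex: "\<forall>p p' t. (\<forall>i<N. p i \<in> prob_simplex) \<and> (\<forall>i<N. p' i \<in> prob_simplex) \<and> 0 \<le> t \<and> t \<le> 1
         \<longrightarrow> jensen_gap \<Psi> N (\<lambda>i. t *\<^sub>R p i + (1 - t) *\<^sub>R p' i)
              \<le> t * jensen_gap \<Psi> N p + (1 - t) * jensen_gap \<Psi> N p'"
    and q_step: "\<forall>t. (\<forall>i<N. q (Suc t) i \<in> prob_simplex) \<and>
         (\<forall>p. (\<forall>i<N. p i \<in> prob_simplex) \<longrightarrow>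
            S_N \<Omega> \<kappa> N (\<lambda>i. gam c emb (\<xi> i)) (\<lambda>i. sbar t) (q (Suc t))
              \<le> S_N \<Omega> \<kappa> N (\<lambda>i. gam c emb (\<xi> i)) (\<lambda>i. sbar t) p)"
    and s_step: "\<forall>t. \<forall>s. S_N \<Omega> \<kappa> N (\<lambda>i. gam c emb (\<xi> i)) (\<lambda>i. sbar (Suc t)) (q (Suc t))
              \<le> S_N \<Omega> \<kappa> N (\<lambda>i. gam c emb (\<xi> i)) (\<lambda>i. s) (q (Suc t))"
  shows "\<exists>C::real. \<forall>\<^sub>F t in sequentially.
           S_N \<Omega> \<kappa> N (\<lambda>i. gam c emb (\<xi> i)) (\<lambda>i. sbar t) (q t)
           - (INF sp \<in> {(s, p). (\<forall>i<N. p i \<in> prob_simplex)}.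
                S_N \<Omega> \<kappa> N (\<lambda>i. gam c emb (\<xi> i)) (\<lambda>i. fst sp) (snd sp))
           \<le> ereal (C / real t)"
proof -
  interpret om \<Omega> using Omega_proper Omega_dom Omega_convex Omega_legendre_H by unfold_locales
  have psi: "real_of_ereal (\<Psi> x) = wv x" if "x \<in> prob_simplex" for x
    using Omega_split that by (simp add: wv_def)
  have jeq: "jensen_gap \<Psi> N r = Jg N r" if r: "\<forall>i<N. r i \<in> prob_simplex" for r
  proof -
    have "avg N r \<in> prob_simplex" using avg_simplex[OF N r] .
    then have "real_of_ereal (\<Psi> ((1 / real N) *\<^sub>R (\<Sum>i<N. r i))) = wv (avg N r)"
      using psi by (simp add: avg_def)
    moreover have "(\<Sum>i<N. real_of_ereal (\<Psi> (r i))) = (\<Sum>i<N. wv (r i))"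
      using r psi by (intro sum.cong) auto
    ultimately show ?thesis by (simp add: jensen_gap_def Jg_def)
  qed
  have jc: "\<forall>p p' t. (\<forall>i<N. p i \<in> prob_simplex) \<and> (\<forall>i<N. p' i \<in> prob_simplex) \<and> 0 \<le> t \<and> t \<le> 1
         \<longrightarrow> Jg N (\<lambda>i. t *\<^sub>R p i + (1 - t) *\<^sub>R p' i) \<le> t * Jg N p + (1 - t) * Jg N p'"
  proof (intro allI impI)
    fix p p' :: "nat \<Rightarrow> real^'y" and t :: real
    assume h: "(\<forall>i<N. p i \<in> prob_simplex) \<and> (\<forall>i<N. p' i \<in> prob_simplex) \<and> 0 \<le> t \<and> t \<le> 1"
    have c: "\<forall>i<N. t *\<^sub>R p i + (1 - t) *\<^sub>R p' i \<in> prob_simplex"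
      using h by (auto intro!: convexD[OF convex_simplex])
    have "jensen_gap \<Psi> N (\<lambda>i. t *\<^sub>R p i + (1 - t) *\<^sub>R p' i) \<le> t * jensen_gap \<Psi> N p + (1 - t) * jensen_gap \<Psi> N p'"
      using jensen_convex h by blast
    then show "Jg N (\<lambda>i. t *\<^sub>R p i + (1 - t) *\<^sub>R p' i) \<le> t * Jg N p + (1 - t) * Jg N p'"
      using jeq[OF c] jeq[of p] jeq[of p'] h by simp
  qed
  show ?thesis by (rule main_gen[OF kappa N jc q_step s_step])
qed

end
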